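(* Assume (B1)–(B3) and consider the NL-IAPIAL method described in the context. For every $k\ge1$ at which $p_k$ is computed, $$\mathcal L_{c_k}(z_k;p_k)\le\mathcal L_{c_k}(z_k;p_{k-1})+\frac1{c_k}\|p_k-p_{k-1}\|^2,$$ $$\mathcal L_{c_k}(z_k;p_k)\le\mathcal L_{c_k}(z_{k-1};p_{k-1})-\Big(\frac{1-\sigma^2}{2\lambda}\Big)\|r_k\|^2+\frac1{c_k}\|p_k-p_{k-1}\|^2.$$
   Context: $\mathcal K\subseteq\mathbb{R}^\ell$ is a nonempty closed convex cone, $\mathcal K^*=\{y:\langle y,x\rangle\ge0\ \forall x\in\mathcal K\}$ its dual cone, $u\preceq_{\mathcal K}v$ means $v-u\in\mathcal K$, $\Pi_S$ is the Euclidean projection onto a closed convex set $S$, $\mathrm{dist}(y,S)$ the Euclidean distance. $\partial_\varepsilon\varphi(z):=\{u:\varphi(z')\ge\varphi(z)+\langle u,z'-z\rangle-\varepsilon\ \forall z'\}$, $\partial=\partial_0$. For differentiable $g:\mathbb{R}^n\to\mathbb{R}^\ell$, $\nabla g(z)\in\mathbb{R}^{n\times\ell}$ is the transpose of the Jacobian. $g$ is $\mathcal K$-convex if $g(tz'+(1-t)z)-tg(z')-(1-t)g(z)\preceq_{\mathcal K}0$ for all $z,z'$, $t\in[0,1]$. (B1) $h:\mathbb{R}^n\to(-\infty,\infty]$ proper lsc convex, $K_h$-Lipschitz on its domain; $\mathcal H:=\mathrm{dom}\,h$ compact with diameter $D_h$. (B2) $f$ differentiable on an open set containing $\mathcal H$;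 $m_f,L_f>0$ with $f(z')-f(z)-\langle\nabla f(z),z'-z\rangle\ge-\frac{m_f}{2}\|z'-z\|^2$ and $\|\nabla f(z')-\nabla f(z)\|\le L_f\|z'-z\|$ on $\mathcal H$. (B3) $g$ is $\mathcal K$-convex, differentiable, $\nabla g$ is $L_g$-Lipschitz on $\mathbb{R}^n$. (B4) there exist $\bar z\in\mathrm{int}\,\mathcal H$, $\tau\in(0,1]$ with $g(\bar z)\preceq_{\mathcal K}0$ and $\max\{\|\nabla g(z)p\|,|\langle p,g(\bar z)\rangle|\}\ge\tau\|p\|$ for all $z\in\mathcal H$, $p\in\mathcal K^*$. Constants: $B_f^{(1)}:=\sup_{\mathcal H}\|\nabla f\|$, $B_g^{(0)}:=\sup_{\mathcal H}\|g\|$, $B_g^{(1)}:=\sup_{\mathcal H}\|\nabla g\|$. Functions: $\phi=f+h$; $\mathcal L_c(z;p):=f(z)+h(z)+\frac1{2c}[\mathrm{dist}^2(p+cg(z),-\mathcal K)-\|p\|^2]$; $\widetilde{\mathcal L}_c(z;p):=\mathcal L_c(z;p)-h(z)$, with $\nabla_z\widetilde{\mathcal L}_c(z;p)=\nabla f(z)+\nabla g(z)\Pi_{\mathcal K^*}(p+cg(z))$; $\Lambda(c,p):=L_f+L_g\|p\|+c(B_g^{(0)}L_g+[B_g^{(1)}]^2)$. NL-IAPIAL method. Inputs: $\lambda\in(0,1/(2m_f)]$, $\sigma\in(0,1/\sqrt2]$, $c_1>0$, $(z_0,p_0)\in\mathcal H\times\mathbb{R}^\ell$, $(\hat\rho,\hat\eta)\in\mathbb{R}^2_{++}$.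 Set $\hat k=0$, $k=1$. Iteration $k$: (1) set $L^\psi_{k-1}:=\lambda\Lambda(c_k,p_{k-1})+1$, $\sigma_{k-1}:=\sigma/\sqrt{L^\psi_{k-1}}$, and obtain (by any procedure) $(z_k,v_k,\varepsilon_k)\in\mathbb{R}^n\times\mathbb{R}^n\times\mathbb{R}_+$ with $v_k\in\partial_{\varepsilon_k}(\lambda\mathcal L_{c_k}(\cdot;p_{k-1})+\frac12\|\cdot-z_{k-1}\|^2)(z_k)$ and $\|v_k\|^2+2\varepsilon_k\le\sigma_{k-1}^2\|v_k+z_{k-1}-z_k\|^2$. (2) Set $r_k:=v_k+z_{k-1}-z_k$, $\delta_k:=\varepsilon_k/\lambda$, $\hat z_k:=\mathrm{argmin}_u\{\lambda[\langle\nabla_z\widetilde{\mathcal L}_{c_k}(z_k;p_{k-1}),u-z_k\rangle+h(u)]-\langle r_k,u-z_k\rangle+\frac{L^\psi_{k-1}}2\|u-z_k\|^2\}$, $w_k:=\frac1\lambda[r_k+L^\psi_{k-1}(z_k-\hat z_k)]$, $\hat p_k:=\Pi_{\mathcal K^*}(p_{k-1}+c_kg(\hat z_k))$, $\hat q_k:=(p_{k-1}-\hat p_k)/c_k$, $\hat w_k:=w_k+\nabla_z\widetilde{\mathcal L}_{c_k}(\hat z_k;p_{k-1})-\nabla_z\widetilde{\mathcal L}_{c_k}(z_k;p_{k-1})$; if $\|\hat w_k\|\le\hat\rho$ and $\|\hat q_k\|\le\hat\eta$, stop. (3) $p_k:=\Pi_{\mathcal K^*}(p_{k-1}+c_kg(z_k))$.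 (4) If $k>\hat k+1$ and $\Delta_k:=\frac{1}{k-\hat k-1}[\mathcal L_{c_k}(z_{\hat k+1};p_{\hat k+1})-\mathcal L_{c_k}(z_k;p_k)]\le\frac{\lambda(1-\sigma^2)\hat\rho^2}{4(1+2\sigma)^2}$, set $c_{k+1}=2c_k$ and $\hat k=k$; otherwise $c_{k+1}=c_k$. (5) $k\leftarrow k+1$. *)

theory Defs
  imports "HOL-Analysis.Analysis"
begin

definition dual_cone :: "'b::real_inner set \<Rightarrow> 'b set" where
  "dual_cone K = {y. \<forall>x\<in>K. 0 \<le> y \<bullet> x}"

definition K_convex :: "'b::real_vector set \<Rightarrow> ('a::real_vector \<Rightarrow> 'b) \<Rightarrow> bool" where
  "K_convex K g \<longleftrightarrow> (\<forall>z z' t. 0 \<le> t \<and> t \<le> 1 \<longrightarrow>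
      0 - (g (t *\<^sub>R z' + (1 - t) *\<^sub>R z) - t *\<^sub>R g z' - (1 - t) *\<^sub>R g z) \<in> K)"

text \<open>epsilon-subdifferential of an extended-valued function phi whose effective domain is H;
  phi is represented by its (real) values on H and is understood to be +infinity outside H.
  Hence u is an eps-subgradient at z iff z is in H and the inequality holds for all z' in H
  (for z' outside H it holds trivially; at z outside H the set is empty).\<close>
definition eps_subdiff_on :: "'a::real_inner set \<Rightarrow> ('a \<Rightarrow> real) \<Rightarrow> real \<Rightarrow> 'a \<Rightarrow> 'a set" where
  "eps_subdiff_on H \<phi> \<epsilon> z =
     {u. z \<in> H \<and> (\<forall>z'\<in>H. \<phi> z' \<ge> \<phi> z + u \<bullet> (z' - z) - \<epsilon>)}"

definition aug_lag ::
  "('a \<Rightarrow> real) \<Rightarrow> ('a \<Rightarrow> real) \<Rightarrow> ('a \<Rightarrow> 'b::euclidean_space) \<Rightarrow> 'b set \<Rightarrow> real \<Rightarrow> 'a \<Rightarrow> 'b \<Rightarrow> real" where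
  "aug_lag f h g K c z p =
     f z + h z + (1 / (2 * c)) * ((infdist (p + c *\<^sub>R g z) (uminus ` K))\<^sup>2 - (norm p)\<^sup>2)"

definition Lambda_const :: "real \<Rightarrow> real \<Rightarrow> real \<Rightarrow> real \<Rightarrow> real \<Rightarrow> 'b::real_normed_vector \<Rightarrow> real" where
  "Lambda_const Lf Lg Bg0 Bg1 c p = Lf + Lg * norm p + c * (Bg0 * Lg + Bg1\<^sup>2)"

end

theory Submission
  imports Defs
begin

lemma dual_cone_closed_convex:
  "closed (dual_cone K) \<and> convex (dual_cone K)"
proof -
  have e: "dual_cone K = (\<Inter>x\<in>K. {y. inner x y \<ge> 0})"
    unfolding dual_cone_def by (auto simp: inner_commute)
  show ?thesis unfolding e
    by (auto intro!: closed_INT convex_INT closed_halfspace_ge convex_halfspace_ge)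
qed

lemma proj_ineq:
  fixes K :: "'b::euclidean_space set" and p G :: 'b
  assumes K: "K \<noteq> {}" "closed K" "convex K" "cone K" and c: "c > 0"
    and P: "P = closest_point (dual_cone K) (p + c *\<^sub>R G)"
  shows "(1 / (2 * c)) * ((infdist (P + c *\<^sub>R G) (uminus ` K))\<^sup>2 - (norm P)\<^sup>2)
     \<le> (1 / (2 * c)) * ((infdist (p + c *\<^sub>R G) (uminus ` K))\<^sup>2 - (norm p)\<^sup>2) + (1 / c) * (norm (P - p))\<^sup>2"
proof -
  define x where "x = p + c *\<^sub>R G"
  define S where "S = uminus ` K"
  have Sc: "closed S" unfolding S_def using closed_negations[OF K(2)] .
  have Sv: "convex S" unfolding S_def using convex_negations[OF K(3)] .
  have Sn: "S \<noteq> {}" unfolding S_def using K(1) by auto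
  define a0 where "a0 = closest_point S x"
  have a0S: "a0 \<in> S" unfolding a0_def using closest_point_in_set[OF Sc Sn] .
  define Q where "Q = x - a0"
  have id: "infdist x S = norm Q"
    unfolding Q_def a0_def infdist_eq_setdist setdist_closest_point[OF Sc Sn] dist_norm ..
  have coneS: "\<And>y t. y \<in> S \<Longrightarrow> t \<ge> 0 \<Longrightarrow> t *\<^sub>R y \<in> S"
  proof -
    fix y and t :: real assume "y \<in> S" "t \<ge> 0"
    then obtain k where "k \<in> K" "y = - k" unfolding S_def by auto
    with K(4) \<open>t\<ge>0\<close> have "t *\<^sub>R k \<in> K" unfolding cone_def by auto
    then show "t *\<^sub>R y \<in> S" unfolding S_def using \<open>y = - k\<close> by (auto intro!: image_eqI[of _ _ "t *\<^sub>R k"])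
  qed
  have d: "\<And>y. y \<in> S \<Longrightarrow> inner Q (y - a0) \<le> 0"
    unfolding Q_def a0_def by (rule closest_point_dot[OF Sv Sc])
  have "inner Q (0 - a0) \<le> 0" using d[OF coneS[OF a0S, of 0]] by simp
  moreover have "inner Q (2 *\<^sub>R a0 - a0) \<le> 0" using d[OF coneS[OF a0S, of 2]] by simp
  ultimately have Qa0: "inner Q a0 = 0" by (simp add: inner_diff_right algebra_simps)
  have QS: "\<And>y. y \<in> S \<Longrightarrow> inner Q y \<le> 0"
    using d Qa0 by (simp add: inner_diff_right)
  have QK: "Q \<in> dual_cone K"
    unfolding dual_cone_def
  proof safe
    fix k assume "k \<in> K"
    then have "- k \<in> S" unfolding S_def by auto
    from QS[OF this] show "0 \<le> Q \<bullet> k" by simp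
  qed
  have "\<forall>z\<in>dual_cone K. dist x Q \<le> dist x z"
  proof
    fix z assume z: "z \<in> dual_cone K"
    obtain k where k: "k \<in> K" "a0 = - k" using a0S unfolding S_def by auto
    have za: "inner z a0 \<le> 0" using z k unfolding dual_cone_def by auto
    have "x - z = (Q - z) + a0" unfolding Q_def by simp
    then have "(norm (x - z))\<^sup>2 = (norm (Q - z))\<^sup>2 + 2 * inner (Q - z) a0 + (norm a0)\<^sup>2"
      by (simp add: power2_norm_eq_inner inner_add_left inner_add_right inner_diff_left inner_diff_right inner_commute algebra_simps)
    also have "\<dots> \<ge> (norm a0)\<^sup>2"
    proof -
      have "inner (Q - z) a0 \<ge> 0" using Qa0 za by (simp add: inner_diff_left)
      moreover have "(norm (Q - z))\<^sup>2 \<ge> 0" by simp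
      ultimately show ?thesis by linarith
    qed
    finally have "norm a0 \<le> norm (x - z)" by (rule power2_le_imp_le) simp
    then show "dist x Q \<le> dist x z" by (simp add: dist_norm Q_def)
  qed
  then have QP: "Q = P" unfolding P x_def[symmetric]
    using closest_point_unique[OF _ _ QK] dual_cone_closed_convex by blast
  have "infdist (P + c *\<^sub>R G) S \<le> dist (P + c *\<^sub>R G) a0" by (rule infdist_le[OF a0S])
  also have "\<dots> = norm (2 *\<^sub>R P - p)"
  proof -
    have "a0 = p + c *\<^sub>R G - P" using QP unfolding Q_def x_def by (metis diff_diff_eq2 diff_add_cancel add_diff_cancel_left')
    then have "P + c *\<^sub>R G - a0 = 2 *\<^sub>R P - p" by (simp add: scaleR_2 algebra_simps)
    then show ?thesis by (simp add: dist_norm)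
  qed
  finally have i2: "(infdist (P + c *\<^sub>R G) S)\<^sup>2 \<le> (norm (2 *\<^sub>R P - p))\<^sup>2"
    by (rule power_mono[OF _ infdist_nonneg])
  have i1: "(infdist (p + c *\<^sub>R G) S)\<^sup>2 = (norm P)\<^sup>2" using id QP x_def by simp
  have alg: "(norm (2 *\<^sub>R P - p))\<^sup>2 - (norm P)\<^sup>2 = (norm P)\<^sup>2 - (norm p)\<^sup>2 + 2 * (norm (P - p))\<^sup>2"
    by (simp add: power2_norm_eq_inner inner_diff_left inner_diff_right inner_commute algebra_simps)
  have "(1 / (2 * c)) * ((infdist (P + c *\<^sub>R G) S)\<^sup>2 - (norm P)\<^sup>2)
      \<le> (1 / (2 * c)) * ((norm (2 *\<^sub>R P - p))\<^sup>2 - (norm P)\<^sup>2)"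
    using i2 c by (intro mult_left_mono) auto
  also have "\<dots> = (1 / (2 * c)) * ((infdist (p + c *\<^sub>R G) S)\<^sup>2 - (norm p)\<^sup>2) + (1 / c) * (norm (P - p))\<^sup>2"
    using c unfolding i1 right_diff_distrib[symmetric] alg by (simp add: algebra_simps)
  finally show ?thesis unfolding S_def .
qed

theorem lemma4p5:
  fixes f h :: "'a::euclidean_space \<Rightarrow> real"
    and gradf :: "'a \<Rightarrow> 'a"
    and g :: "'a \<Rightarrow> 'b::euclidean_space"
    and g' :: "'a \<Rightarrow> 'a \<Rightarrow> 'b"
    and K :: "'b set" and H :: "'a set"
    and Kh mf Lf Lg lam sig c1 :: real
    and z v :: "nat \<Rightarrow> 'a" and eps :: "nat \<Rightarrow> real"
    and p :: "nat \<Rightarrow> 'b" and c :: "nat \<Rightarrow> real"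
    and k :: nat
  assumes K_cone: "K \<noteq> {}" "closed K" "convex K" "cone K"
    \<comment> \<open>(B1): h proper lsc convex, Kh-Lipschitz on its domain H, H compact
        (h is given by its values on H and is +infinity outside H)\<close>
    and B1: "H \<noteq> {}" "compact H" "convex H" "convex_on H h"
            "continuous_on H h" "Kh-lipschitz_on H h"
    \<comment> \<open>(B2)\<close>
    and B2_diff: "\<exists>U. open U \<and> H \<subseteq> U \<and>
                    (\<forall>z\<in>U. (f has_derivative (\<lambda>x. gradf z \<bullet> x)) (at z))"
    and B2_const: "mf > 0" "Lf > 0"
    and B2_weak: "\<forall>z\<in>H. \<forall>z'\<in>H.
                    f z' - f z - gradf z \<bullet> (z' - z) \<ge> - (mf / 2) * (norm (z' - z))\<^sup>2"
    and B2_lip: "\<forall>z\<in>H. \<forall>z'\<in>H. norm (gradf z' - gradf z) \<le> Lf * norm (z' - z)"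
    \<comment> \<open>(B3): nabla g(z) = adjoint (g' z), the transpose of the Jacobian\<close>
    and B3_conv: "K_convex K g"
    and B3_diff: "\<forall>z. (g has_derivative g' z) (at z)"
    and B3_lip: "\<forall>z z'. onorm (\<lambda>q. adjoint (g' z') q - adjoint (g' z) q) \<le> Lg * norm (z' - z)"
    \<comment> \<open>method inputs\<close>
    and lam: "0 < lam" "lam \<le> 1 / (2 * mf)"
    and sig: "0 < sig" "sig \<le> 1 / sqrt 2"
    and c1: "c1 > 0" "c 1 = c1"
    and z0: "z 0 \<in> H"
    \<comment> \<open>penalty update (step 4): c_(j+1) is either c_j or 2 c_j\<close>
    and c_upd: "\<forall>j. 1 \<le> j \<and> j < k \<longrightarrow> (c (Suc j) = c j \<or> c (Suc j) = 2 * c j)"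
    \<comment> \<open>step 1 at every iteration j = 1..k\<close>
    and step1: "\<forall>j. 1 \<le> j \<and> j \<le> k \<longrightarrow>
        (let Bg0 = Sup ((\<lambda>u. norm (g u)) ` H);
             Bg1 = Sup ((\<lambda>u. onorm (adjoint (g' u))) ` H);
             Lpsi = lam * Lambda_const Lf Lg Bg0 Bg1 (c j) (p (j - 1)) + 1;
             sigj = sig / sqrt Lpsi
         in eps j \<ge> 0 \<and>
            v j \<in> eps_subdiff_on H
                    (\<lambda>u. lam * aug_lag f h g K (c j) u (p (j - 1)) + (1/2) * (norm (u - z (j - 1)))\<^sup>2)
                    (eps j) (z j) \<and>
            (norm (v j))\<^sup>2 + 2 * eps j \<le> sigj\<^sup>2 * (norm (v j + z (j - 1) - z j))\<^sup>2)"
    \<comment> \<open>step 3 at every iteration j = 1..k\<close>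
    and step3: "\<forall>j. 1 \<le> j \<and> j \<le> k \<longrightarrow>
        p j = closest_point (dual_cone K) (p (j - 1) + c j *\<^sub>R g (z j))"
    and k: "1 \<le> k"
  shows "aug_lag f h g K (c k) (z k) (p k)
           \<le> aug_lag f h g K (c k) (z k) (p (k - 1)) + (1 / c k) * (norm (p k - p (k - 1)))\<^sup>2
       \<and> aug_lag f h g K (c k) (z k) (p k)
           \<le> aug_lag f h g K (c k) (z (k - 1)) (p (k - 1))
              - ((1 - sig\<^sup>2) / (2 * lam)) * (norm (v k + z (k - 1) - z k))\<^sup>2
              + (1 / c k) * (norm (p k - p (k - 1)))\<^sup>2"
  proof -
  have cpos: "\<And>j. 1 \<le> j \<Longrightarrow> j \<le> k \<Longrightarrow> c j > 0"
  proof -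
    fix j show "1 \<le> j \<Longrightarrow> j \<le> k \<Longrightarrow> c j > 0"
    proof (induction j)
      case 0 then show ?case by simp
    next
      case (Suc n)
      show ?case
      proof (cases "n = 0")
        case True then show ?thesis using c1 by simp
      next
        case False
        then have "c n > 0" using Suc by simp
        moreover have "c (Suc n) = c n \<or> c (Suc n) = 2 * c n" using c_upd Suc False by simp
        ultimately show ?thesis by auto
      qed
    qed
  qed
  have ck: "c k > 0" using cpos k by simp
  have Lg: "Lg \<ge> 0"
  proof -
    obtain b :: 'a where b: "b \<in> Basis" using nonempty_Basis by blast
    have lin: "\<And>z. linear (g' z)" using B3_diff has_derivative_linear by blast
    have "linear (\<lambda>q. adjoint (g' b) q - adjoint (g' 0) q)"
      using adjoint_linear[OF lin] by (intro linear_compose_sub) auto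
    then have "bounded_linear (\<lambda>q. adjoint (g' b) q - adjoint (g' 0) q)"
      using linear_conv_bounded_linear by blast
    then have "0 \<le> onorm (\<lambda>q. adjoint (g' b) q - adjoint (g' 0) q)" by (rule onorm_pos_le)
    also have "\<dots> \<le> Lg * norm (b - 0)" using B3_lip by blast
    finally have "0 \<le> Lg * norm b" by simp
    moreover have "norm b > 0" using b by (simp add: nonzero_Basis)
    ultimately show ?thesis by (simp add: zero_le_mult_iff)
  qed
  define Bg0 where "Bg0 = Sup ((\<lambda>u. norm (g u)) ` H)"
  define Bg1 where "Bg1 = Sup ((\<lambda>u. onorm (adjoint (g' u))) ` H)"
  have Bg0: "Bg0 \<ge> 0"
  proof -
    have "continuous_on H g"
      using B3_diff has_derivative_continuous continuous_at_imp_continuous_on by blast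
    then have "continuous_on H (\<lambda>u. norm (g u))" by (intro continuous_intros)
    then have "compact ((\<lambda>u. norm (g u)) ` H)" using B1(2) compact_continuous_image by blast
    then have bdd: "bdd_above ((\<lambda>u. norm (g u)) ` H)"
      by (intro bounded_imp_bdd_above compact_imp_bounded)
    obtain u where "u \<in> H" using B1(1) by blast
    then have "norm (g u) \<le> Bg0" unfolding Bg0_def using cSup_upper[OF _ bdd, of "norm (g u)"] by blast
    then show ?thesis using norm_ge_zero[of "g u"] by linarith
  qed
  have S1: "eps j \<ge> 0 \<and>
            v j \<in> eps_subdiff_on H
                    (\<lambda>u. lam * aug_lag f h g K (c j) u (p (j - 1)) + (1/2) * (norm (u - z (j - 1)))\<^sup>2)
                    (eps j) (z j) \<and>
            (norm (v j))\<^sup>2 + 2 * eps j \<le> (sig / sqrt (lam * Lambda_const Lf Lg Bg0 Bg1 (c j) (p (j - 1)) + 1))\<^sup>2 * (norm (v j + z (j - 1) - z j))\<^sup>2"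
    if "1 \<le> j" "j \<le> k" for j
    using step1 that unfolding Bg0_def Bg1_def Let_def by blast
  have part1: "aug_lag f h g K (c k) (z k) (p k)
           \<le> aug_lag f h g K (c k) (z k) (p (k - 1)) + (1 / c k) * (norm (p k - p (k - 1)))\<^sup>2"
    using proj_ineq[OF K_cone ck, of "p k" "p (k - 1)" "g (z k)"] step3 k
    unfolding aug_lag_def by simp
  have zH: "z (k - 1) \<in> H"
  proof (cases "k = 1")
    case True then show ?thesis using z0 by simp
  next
    case False
    then have "v (k-1) \<in> eps_subdiff_on H
                    (\<lambda>u. lam * aug_lag f h g K (c (k-1)) u (p (k - 1 - 1)) + (1/2) * (norm (u - z (k - 1 - 1)))\<^sup>2)
                    (eps (k-1)) (z (k-1))" using S1[of "k-1"] k by simp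
    then show ?thesis unfolding eps_subdiff_on_def by blast
  qed
  define L where "L = (\<lambda>u. aug_lag f h g K (c k) u (p (k - 1)))"
  define r where "r = v k + z (k - 1) - z k"
  define Lpsi where "Lpsi = lam * Lambda_const Lf Lg Bg0 Bg1 (c k) (p (k - 1)) + 1"
  have Lpsi: "Lpsi \<ge> 1"
  proof -
    have "Lambda_const Lf Lg Bg0 Bg1 (c k) (p (k - 1)) \<ge> 0"
      unfolding Lambda_const_def using B2_const Lg Bg0 ck by (intro add_nonneg_nonneg mult_nonneg_nonneg) auto
    then show ?thesis unfolding Lpsi_def using lam by simp
  qed
  have sq: "(sig / sqrt Lpsi)\<^sup>2 \<le> sig\<^sup>2"
    using Lpsi sig by (simp add: power_divide divide_le_eq)
  from S1[OF k order_refl] have e0: "eps k \<ge> 0"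
    and sub: "v k \<in> eps_subdiff_on H
                    (\<lambda>u. lam * L u + (1/2) * (norm (u - z (k - 1)))\<^sup>2) (eps k) (z k)"
    and nv: "(norm (v k))\<^sup>2 + 2 * eps k \<le> (sig / sqrt Lpsi)\<^sup>2 * (norm r)\<^sup>2"
    unfolding L_def Lpsi_def r_def by auto
  have ineq: "lam * L (z (k-1)) + (1/2) * (norm (z (k-1) - z (k - 1)))\<^sup>2
       \<ge> lam * L (z k) + (1/2) * (norm (z k - z (k - 1)))\<^sup>2 + v k \<bullet> (z (k-1) - z k) - eps k"
    using sub zH unfolding eps_subdiff_on_def by blast
  have alg: "(1/2) * (norm (z k - z (k - 1)))\<^sup>2 + v k \<bullet> (z (k-1) - z k)
      = (1/2) * (norm r)\<^sup>2 - (1/2) * (norm (v k))\<^sup>2"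
  proof -
    have e: "z k - z (k - 1) = v k - r" unfolding r_def by simp
    have e2: "z (k-1) - z k = r - v k" unfolding r_def by simp
    show ?thesis unfolding e e2
      by (simp add: power2_norm_eq_inner inner_diff_left inner_diff_right inner_commute algebra_simps)
  qed
  have "(norm r)\<^sup>2 \<ge> 0" by simp
  then have "(sig / sqrt Lpsi)\<^sup>2 * (norm r)\<^sup>2 \<le> sig\<^sup>2 * (norm r)\<^sup>2"
    using sq by (rule mult_right_mono[rotated])
  then have "lam * L (z k) \<le> lam * L (z (k-1)) - (1/2) * (1 - sig\<^sup>2) * (norm r)\<^sup>2"
    using ineq alg nv by (simp add: algebra_simps)
  then have "L (z k) \<le> L (z (k-1)) - ((1 - sig\<^sup>2) / (2 * lam)) * (norm r)\<^sup>2"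
    using lam(1) by (simp add: field_simps)
  with part1 show ?thesis unfolding L_def r_def by simp
qed

end
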